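(* In the box problem with an exogenous ordering, every $\kappa$-thresholding policy is non-exposed. Moreover, the expected net value of running the $\kappa$-thresholding policy with target interval $X$ equals the expected value selected by the threshold stopping rule that observes the sequence $\kappa_1,\kappa_2,\ldots,\kappa_m$ and selects the first element belonging to $X$ (with value $0$ if none does).
   Context: Box problem: there are boxes $1,\ldots,m$. Box $i$ contains an independent non-negative random prize $v_i$ and has opening cost $c_i\ge0$. The priority $z_i$ is defined by $\mathbb{E}[(v_i-z_i)^+]=c_i$ (assumed well-defined), and the covered call value is $\kappa_i=\min\{v_i,z_i\}$. In the exogenous-ordering version, the searcher considers the boxes one by one in the order $1,\ldots,m$. For each box she decides whether to open it (paying $c_i$ and observing $v_i$) and, if opened, whether to claim its prize (and stop). She cannot return to a skipped box or to an unclaimed prize. The net value is the claimed prize (or $0$) minus the total cost of opened boxes. For a policy, let $A_i$ be the indicator that box $i$ is selected and $B_i$ the indicator that it is opened. The policy is non-exposed if $A_i=B_i$ at every sample point where $v_i>z_i$. A $\kappa$-thresholding policy with target interval $X=(\theta,\infty)$ or $X=[\theta,\infty)$ declines to open every box with $z_i\notin X$. For a box with $z_i\in X$, it opens the box and claims the prize if and only if $v_i\in X$. *)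

theory Defs
  imports "HOL-Probability.Probability"
begin

text \<open>Boxes are indexed 1..m. Prizes v i, costs c i, priorities z i are given.\<close>

definition covered_call :: "(nat \<Rightarrow> 'a \<Rightarrow> real) \<Rightarrow> (nat \<Rightarrow> real) \<Rightarrow> nat \<Rightarrow> 'a \<Rightarrow> real" where
  "covered_call v z i \<omega> = min (v i \<omega>) (z i)"

definition thr_open :: "(nat \<Rightarrow> real) \<Rightarrow> real set \<Rightarrow> (nat \<Rightarrow> 'a \<Rightarrow> real) \<Rightarrow> nat \<Rightarrow> 'a \<Rightarrow> bool" where
  "thr_open z X v i \<omega> \<longleftrightarrow> z i \<in> X \<and> (\<forall>j\<in>{1..<i}. \<not> (z j \<in> X \<and> v j \<omega> \<in> X))"

definition thr_select :: "(nat \<Rightarrow> real) \<Rightarrow> real set \<Rightarrow> (nat \<Rightarrow> 'a \<Rightarrow> real) \<Rightarrow> nat \<Rightarrow> 'a \<Rightarrow> bool" where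
  "thr_select z X v i \<omega> \<longleftrightarrow> thr_open z X v i \<omega> \<and> v i \<omega> \<in> X"

definition non_exposed :: "'a measure \<Rightarrow> nat \<Rightarrow> (nat \<Rightarrow> 'a \<Rightarrow> real) \<Rightarrow> (nat \<Rightarrow> real)
    \<Rightarrow> (nat \<Rightarrow> 'a \<Rightarrow> bool) \<Rightarrow> (nat \<Rightarrow> 'a \<Rightarrow> bool) \<Rightarrow> bool" where
  "non_exposed M m v z A B \<longleftrightarrow>
     (\<forall>i\<in>{1..m}. \<forall>\<omega>\<in>space M. v i \<omega> > z i \<longrightarrow> (A i \<omega> \<longleftrightarrow> B i \<omega>))"

definition net_value :: "nat \<Rightarrow> (nat \<Rightarrow> real) \<Rightarrow> (nat \<Rightarrow> 'a \<Rightarrow> real)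
    \<Rightarrow> (nat \<Rightarrow> 'a \<Rightarrow> bool) \<Rightarrow> (nat \<Rightarrow> 'a \<Rightarrow> bool) \<Rightarrow> 'a \<Rightarrow> real" where
  "net_value m c v A B \<omega> =
     (\<Sum>i\<in>{1..m}. of_bool (A i \<omega>) * v i \<omega>) - (\<Sum>i\<in>{1..m}. of_bool (B i \<omega>) * c i)"

definition threshold_stop_value :: "real set \<Rightarrow> nat \<Rightarrow> (nat \<Rightarrow> real) \<Rightarrow> real" where
  "threshold_stop_value X m x =
     (if \<exists>i\<in>{1..m}. x i \<in> X then x (LEAST i. 1 \<le> i \<and> i \<le> m \<and> x i \<in> X) else 0)"

end

theory Submission imports Defs begin

lemma tsv_sum:
  fixes x :: "nat \<Rightarrow> real"
  shows "threshold_stop_value X m x = (\<Sum>i\<in>{1..m}. of_bool (x i \<in> X \<and> (\<forall>j\<in>{1..<i}. x j \<notin> X)) * x i)"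
proof (cases "\<exists>i\<in>{1..m}. x i \<in> X")
  case False
  then show ?thesis unfolding threshold_stop_value_def by (auto intro!: sum.neutral)
next
  case True
  define l where "l = (LEAST i. 1 \<le> i \<and> i \<le> m \<and> x i \<in> X)"
  have l: "1 \<le> l \<and> l \<le> m \<and> x l \<in> X" unfolding l_def using True
    by (metis (mono_tags, lifting) LeastI atLeastAtMost_iff)
  have lmin: "\<And>i. 1 \<le> i \<and> i \<le> m \<and> x i \<in> X \<Longrightarrow> l \<le> i" unfolding l_def by (rule Least_le)
  have eq: "\<And>i. i\<in>{1..m} \<Longrightarrow> (x i \<in> X \<and> (\<forall>j\<in>{1..<i}. x j \<notin> X)) \<longleftrightarrow> i = l"
  proof -
    fix i assume i: "i \<in> {1..m}"
    show "(x i \<in> X \<and> (\<forall>j\<in>{1..<i}. x j \<notin> X)) \<longleftrightarrow> i = l"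
    proof
      assume a: "x i \<in> X \<and> (\<forall>j\<in>{1..<i}. x j \<notin> X)"
      then have "l \<le> i" using lmin i by auto
      moreover have "\<not> l < i" using a l by auto
      ultimately show "i = l" by simp
    next
      assume "i = l" then show "x i \<in> X \<and> (\<forall>j\<in>{1..<i}. x j \<notin> X)"
        using l lmin by fastforce
    qed
  qed
  have "(\<Sum>i\<in>{1..m}. of_bool (x i \<in> X \<and> (\<forall>j\<in>{1..<i}. x j \<notin> X)) * x i)
      = (\<Sum>i\<in>{1..m}. if i = l then x i else 0)"
  proof (rule sum.cong)
    fix i assume i: "i \<in> {1..m}"
    show "of_bool (x i \<in> X \<and> (\<forall>j\<in>{1..<i}. x j \<notin> X)) * x i = (if i = l then x i else 0)"
      using eq[OF i] by (cases "i = l") auto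
  qed simp
  also have "\<dots> = x l" using l by (simp add: sum.delta)
  finally show ?thesis unfolding threshold_stop_value_def l_def[symmetric] using True by simp
qed

lemma meas_Y1:
  fixes X :: "real set" and z :: "nat \<Rightarrow> real"
  assumes [measurable]: "X \<in> sets borel"
  shows "(\<lambda>x. of_bool (z i \<in> X \<and> (\<forall>j\<in>{1..<i}. \<not>(z j \<in> X \<and> x j \<in> X))) :: real) \<in> borel_measurable (PiM {1..<i::nat} (\<lambda>_. borel))"
  by measurable

lemma meas_Y2:
  fixes z :: "nat \<Rightarrow> real"
  shows "(\<lambda>x. max (x i - z i) 0) \<in> borel_measurable (PiM {i::nat} (\<lambda>_. borel))"
  by measurable
theorem mainTheorem11:
  fixes M :: "'a measure" and m :: nat and v :: "nat \<Rightarrow> 'a \<Rightarrow> real"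
    and c z :: "nat \<Rightarrow> real" and X :: "real set" and \<theta> :: real
  assumes "prob_space M"
    and "\<forall>i\<in>{1..m}. v i \<in> borel_measurable M"
    and "prob_space.indep_vars M (\<lambda>_. borel) v {1..m}"
    and "\<forall>i\<in>{1..m}. \<forall>\<omega>\<in>space M. v i \<omega> \<ge> 0"
    and "\<forall>i\<in>{1..m}. c i \<ge> 0"
    and "\<forall>i\<in>{1..m}. integrable M (\<lambda>\<omega>. max (v i \<omega> - z i) 0)"
    and "\<forall>i\<in>{1..m}. prob_space.expectation M (\<lambda>\<omega>. max (v i \<omega> - z i) 0) = c i"
    and "X = {\<theta><..} \<or> X = {\<theta>..}"
  shows "non_exposed M m v z (thr_select z X v) (thr_open z X v)
       \<and> prob_space.expectation M (net_value m c v (thr_select z X v) (thr_open z X v))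
         = prob_space.expectation M
             (\<lambda>\<omega>. threshold_stop_value X m (\<lambda>i. covered_call v z i \<omega>))"
proof -
  interpret P: prob_space M by fact
  have Xup: "\<And>a b. a \<in> X \<Longrightarrow> a \<le> b \<Longrightarrow> b \<in> X" using assms(8) by auto
  have Xmin: "\<And>a b. min a b \<in> X \<longleftrightarrow> a \<in> X \<and> b \<in> X"
    using assms(8) by (auto simp: min_def)
  have Xb[measurable]: "X \<in> sets borel" using assms(8) by auto
  have NE: "non_exposed M m v z (thr_select z X v) (thr_open z X v)"
    unfolding non_exposed_def thr_select_def using Xup unfolding thr_open_def
    by (meson less_imp_le)
  define f where "f i \<omega> = max (v i \<omega> - z i) 0" for i \<omega>
  define B where "B i \<omega> = (of_bool (thr_open z X v i \<omega>) :: real)" for i \<omega>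
  define A where "A i \<omega> = (of_bool (thr_select z X v i \<omega>) :: real)" for i \<omega>
  define K where "K i \<omega> = covered_call v z i \<omega>" for i \<omega>
  have vmeas[measurable]: "\<And>i. i \<in> {1..m} \<Longrightarrow> v i \<in> borel_measurable M" using assms(2) by auto
  have Kbound: "\<And>i \<omega>. i \<in> {1..m} \<Longrightarrow> \<omega> \<in> space M \<Longrightarrow> \<bar>K i \<omega>\<bar> \<le> \<bar>z i\<bar>"
    using assms(4) unfolding K_def covered_call_def by fastforce
  have key: "B i \<in> borel_measurable M \<and> A i \<in> borel_measurable M \<and>
     integral\<^sup>L M (\<lambda>\<omega>. B i \<omega> * f i \<omega>) = integral\<^sup>L M (B i) * c i" if i: "i \<in> {1..m}" for i
  proof -
    define Y1 where "Y1 x = (of_bool (z i \<in> X \<and> (\<forall>j\<in>{1..<i}. \<not>(z j \<in> X \<and> x j \<in> X))) :: real)" for x :: "nat \<Rightarrow> real"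
    define Y2 where "Y2 x = max (x i - z i) 0" for x :: "nat \<Rightarrow> real"
    define R1 where "R1 \<omega> = restrict (\<lambda>j. v j \<omega>) {1..<i}" for \<omega>
    define R2 where "R2 \<omega> = restrict (\<lambda>j. v j \<omega>) {i}" for \<omega>
    have ind: "P.indep_var (PiM {1..<i} (\<lambda>_. borel)) R1 (PiM {i} (\<lambda>_. borel)) R2"
      unfolding R1_def R2_def using i by (intro P.indep_var_restrict[OF assms(3)]) auto
    have m1: "Y1 \<in> borel_measurable (PiM {1..<i} (\<lambda>_. borel))" unfolding Y1_def by (rule meas_Y1) simp
    have m2: "Y2 \<in> borel_measurable (PiM {i} (\<lambda>_. borel))" unfolding Y2_def by (rule meas_Y2)
    have ind2: "P.indep_var borel (Y1 \<circ> R1) borel (Y2 \<circ> R2)"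
      by (rule P.indep_var_compose[OF ind m1 m2])
    have BY: "B i = Y1 \<circ> R1" unfolding B_def Y1_def R1_def thr_open_def by (auto simp: fun_eq_iff)
    have fY: "f i = Y2 \<circ> R2" unfolding f_def Y2_def R2_def by (auto simp: fun_eq_iff)
    have R1m: "R1 \<in> measurable M (PiM {1..<i} (\<lambda>_. borel))" unfolding R1_def
      using i by (intro measurable_restrict) auto
    have Bm: "B i \<in> borel_measurable M" unfolding BY using R1m m1 by (rule measurable_comp)
    have Am: "A i \<in> borel_measurable M"
    proof -
      have "A i = (\<lambda>\<omega>. B i \<omega> * indicator X (v i \<omega>))"
        unfolding A_def B_def thr_select_def by (auto simp: fun_eq_iff indicator_def)
      also have "\<dots> \<in> borel_measurable M" using Bm i by measurable
      finally show ?thesis .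
    qed
    have Bint: "integrable M (B i)"
      by (rule P.integrable_const_bound[where B=1]) (auto simp: B_def Bm)
    have fint: "integrable M (f i)" unfolding f_def using assms(6) i by auto
    have "integral\<^sup>L M (\<lambda>\<omega>. B i \<omega> * f i \<omega>) = integral\<^sup>L M (B i) * integral\<^sup>L M (f i)"
      using P.indep_var_lebesgue_integral[OF ind2] Bint fint unfolding BY fY by (simp add: comp_def)
    also have "integral\<^sup>L M (f i) = c i" unfolding f_def using assms(7) i by auto
    finally show ?thesis using Bm Am by simp
  qed
  have point: "net_value m c v (thr_select z X v) (thr_open z X v) \<omega>
     = (\<Sum>i\<in>{1..m}. A i \<omega> * K i \<omega>) + (\<Sum>i\<in>{1..m}. B i \<omega> * f i \<omega> - B i \<omega> * c i)"
    if \<omega>: "\<omega> \<in> space M" for \<omega>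
  proof -
    have "of_bool (thr_select z X v i \<omega>) * v i \<omega> - of_bool (thr_open z X v i \<omega>) * c i
        = A i \<omega> * K i \<omega> + (B i \<omega> * f i \<omega> - B i \<omega> * c i)" if i: "i \<in> {1..m}" for i
    proof (cases "v i \<omega> > z i")
      case True
      then have "thr_select z X v i \<omega> \<longleftrightarrow> thr_open z X v i \<omega>"
        using NE i \<omega> unfolding non_exposed_def by blast
      then show ?thesis using True unfolding A_def B_def K_def f_def covered_call_def
        by (auto simp: algebra_simps)
    next
      case False
      then show ?thesis unfolding A_def B_def K_def f_def covered_call_def
        by (auto simp: algebra_simps thr_select_def)
    qed
    then have "(\<Sum>i\<in>{1..m}. of_bool (thr_select z X v i \<omega>) * v i \<omega> - of_bool (thr_open z X v i \<omega>) * c i)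
       = (\<Sum>i\<in>{1..m}. A i \<omega> * K i \<omega> + (B i \<omega> * f i \<omega> - B i \<omega> * c i))"
      by (intro sum.cong) auto
    then show ?thesis unfolding net_value_def sum_subtractf[symmetric] sum.distrib[symmetric] by simp
  qed
  have tsv: "threshold_stop_value X m (\<lambda>i. covered_call v z i \<omega>) = (\<Sum>i\<in>{1..m}. A i \<omega> * K i \<omega>)"
    for \<omega>
  proof -
    have "A i \<omega> = of_bool (K i \<omega> \<in> X \<and> (\<forall>j\<in>{1..<i}. K j \<omega> \<notin> X))" for i
      unfolding A_def K_def covered_call_def thr_select_def thr_open_def Xmin by auto
    then show ?thesis unfolding tsv_sum K_def by simp
  qed
  have intAK: "integrable M (\<lambda>\<omega>. \<Sum>i\<in>{1..m}. A i \<omega> * K i \<omega>)"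
  proof (intro Bochner_Integration.integrable_sum)
    fix i assume i: "i \<in> {1..m}"
    have Km: "K i \<in> borel_measurable M" unfolding K_def covered_call_def using i by measurable
    show "integrable M (\<lambda>\<omega>. A i \<omega> * K i \<omega>)"
    proof (rule P.integrable_const_bound[where B="\<bar>z i\<bar>"])
      show "AE \<omega> in M. norm (A i \<omega> * K i \<omega>) \<le> \<bar>z i\<bar>"
        using Kbound[OF i] by (auto simp: A_def abs_mult)
      show "(\<lambda>\<omega>. A i \<omega> * K i \<omega>) \<in> borel_measurable M" using key[OF i] Km by (intro borel_measurable_times) auto
    qed
  qed
  have intB1: "integrable M (\<lambda>\<omega>. B i \<omega> * f i \<omega>)" if i: "i \<in> {1..m}" for i
  proof -
    have Bm: "B i \<in> borel_measurable M" using key[OF i] by simp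
    have fm: "f i \<in> borel_measurable M" unfolding f_def using i by measurable
    show ?thesis
    proof (rule Bochner_Integration.integrable_bound[where f="f i"])
      show "integrable M (f i)" unfolding f_def using assms(6) i by auto
      show "(\<lambda>\<omega>. B i \<omega> * f i \<omega>) \<in> borel_measurable M" using Bm fm by (intro borel_measurable_times) auto
      show "AE \<omega> in M. norm (B i \<omega> * f i \<omega>) \<le> norm (f i \<omega>)"
        by (auto simp: B_def f_def)
    qed
  qed
  have intB: "integrable M (B i)" if i: "i \<in> {1..m}" for i
  proof -
    have Bm: "B i \<in> borel_measurable M" using key[OF i] by simp
    show ?thesis
    proof (rule P.integrable_const_bound[where B=1])
      show "AE \<omega> in M. norm (B i \<omega>) \<le> 1" by (auto simp: B_def)
    qed (rule Bm)
  qed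
  have intB2: "integrable M (\<lambda>\<omega>. B i \<omega> * c i)" if i: "i \<in> {1..m}" for i
    using intB[OF i] by (rule integrable_mult_left)
  have intBf: "integrable M (\<lambda>\<omega>. B i \<omega> * f i \<omega> - B i \<omega> * c i)" if i: "i \<in> {1..m}" for i
    using intB1[OF i] intB2[OF i] by (rule Bochner_Integration.integrable_diff)
  have "P.expectation (net_value m c v (thr_select z X v) (thr_open z X v))
      = P.expectation (\<lambda>\<omega>. (\<Sum>i\<in>{1..m}. A i \<omega> * K i \<omega>) + (\<Sum>i\<in>{1..m}. B i \<omega> * f i \<omega> - B i \<omega> * c i))"
    by (rule Bochner_Integration.integral_cong) (auto simp: point)
  also have "\<dots> = P.expectation (\<lambda>\<omega>. \<Sum>i\<in>{1..m}. A i \<omega> * K i \<omega>)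
       + (\<Sum>i\<in>{1..m}. P.expectation (\<lambda>\<omega>. B i \<omega> * f i \<omega> - B i \<omega> * c i))"
    using intAK intBf by (subst Bochner_Integration.integral_add) (auto simp: Bochner_Integration.integral_sum)
  also have "(\<Sum>i\<in>{1..m}. P.expectation (\<lambda>\<omega>. B i \<omega> * f i \<omega> - B i \<omega> * c i)) = 0"
  proof (rule sum.neutral, rule ballI)
    fix i assume i: "i \<in> {1..m}"
    have h1: "P.expectation (\<lambda>\<omega>. B i \<omega> * f i \<omega> - B i \<omega> * c i)
        = P.expectation (\<lambda>\<omega>. B i \<omega> * f i \<omega>) - P.expectation (\<lambda>\<omega>. B i \<omega> * c i)"
      using intB1[OF i] intB2[OF i] by (rule Bochner_Integration.integral_diff)
    have h2: "P.expectation (\<lambda>\<omega>. B i \<omega> * c i) = P.expectation (B i) * c i"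
      by (rule integral_mult_left_zero)
    have h3: "P.expectation (\<lambda>\<omega>. B i \<omega> * f i \<omega>) = P.expectation (B i) * c i"
      using key[OF i] by simp
    show "P.expectation (\<lambda>\<omega>. B i \<omega> * f i \<omega> - B i \<omega> * c i) = 0" using h1 h2 h3 by simp
  qed
  finally show ?thesis using NE tsv by simp
qed

end
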